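(* Let $(X,\to,d_A)$ be a metric transition system over $A$, let $\mathcal G\subseteq[0,1]^X$ and $d_0=\alpha_S(\mathcal G)$, and assume that for every $\varepsilon>0$ and $x\in X$ there is $g\in\mathcal G$ with $g(x)=1$ and $g(x)\ominus g(x')\ge d_0(x,x')-\varepsilon$ for all $x'\in X$. Then \[\alpha_T\big(\mu(\mathit{lo}_T\cup\mathcal G)\big)=(d_{\mathrm{Tr}}\otimes d_0)_{\overrightarrow H}\circ(\hat\delta\times\hat\delta),\] i.e. for $X_1,X_2\subseteq X$ the left side at $(X_1,X_2)$ equals $\bigvee_{(\sigma_1,x_1')\in\hat\delta[X_1]}\bigwedge_{(\sigma_2,x_2')\in\hat\delta[X_2]}\max\{d_{\mathrm{Tr}}(\sigma_1,\sigma_2),d_0(x_1',x_2')\}$. Here $\mu(\mathit{lo}_T\cup\mathcal G)$ is the least fixpoint in $(\mathcal P([0,1]^X),\subseteq)$ of $\mathcal F\mapsto\mathit{lo}_T(\mathcal F)\cup\mathcal G$. The same holds if $\mathit{lo}_T$ is replaced by $\mathit{lo}'(\mathcal F)=\bigcup_{a\in A}\{\bigcirc_af\mid f\in\mathcal F\}\cup\{1\}$.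
   Context: A metric transition system over $A$ is $(X,\to,d_A)$ with $\to\subseteq X\times A\times X$ and a metric $d_A\colon A\times A\to[0,1]$. $r\oplus s=\min\{r+s,1\}$, $r\ominus s=\max\{0,r-s\}$; $\bigvee\emptyset=0$, $\bigwedge\emptyset=1$. $\alpha_S(\mathcal G)(x_1,x_2)=\bigvee_{f\in\mathcal G}(f(x_1)\ominus f(x_2))$. $\hat\delta[Y]=\{(\sigma,x')\mid\sigma\in A^*,\exists x\in Y\colon x\xrightarrow{\sigma}x'\}$ (paths, including the empty word). $d_{\mathrm{Tr}}(\sigma_1,\sigma_2)=1$ if $|\sigma_1|\neq|\sigma_2|$, $d_{\mathrm{Tr}}(\varepsilon,\varepsilon)=0$, $d_{\mathrm{Tr}}(a_1\sigma_1',a_2\sigma_2')=\max\{d_A(a_1,a_2),d_{\mathrm{Tr}}(\sigma_1',\sigma_2')\}$. $(d\otimes d')((u,v),(u',v'))=\max\{d(u,u'),d'(v,v')\}$, and $d_{\overrightarrow H}(U,V)=\bigvee_{u\in U}\bigwedge_{v\in V}d(u,v)$. $\bigcirc_af(x)=\bigvee\{(1-d_A(b,a))\land f(x')\mid x\xrightarrow{b}x'\}$. For $f\colon X\to[0,1]$, $\tilde f(Y)=\bigvee_{x\in Y}f(x)$; $\alpha_T(\mathcal F)(X_1,X_2)=\bigvee_{f\in\mathcal F}(\tilde f(X_1)\ominus\tilde f(X_2))$. $\mathit{lo}_T(\mathcal F)=\bigcup_{a\in A}\{\bigcirc_af\mid f\in\mathrm{cl}^{\mathrm{sh}}(\mathcal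 F)\}\cup\{1\}$ where $\mathrm{cl}^{\mathrm{sh}}$ closes under constant shifts $f\mapsto f\ominus c$, $f\mapsto f\oplus c$, $c\in[0,1]$, and $1$ is the constant-1 function. *)

theory Defs
  imports Main "HOL.Real"
begin

definition tplus :: "real \<Rightarrow> real \<Rightarrow> real" where
  "tplus r s = min (r + s) 1"
definition tminus :: "real \<Rightarrow> real \<Rightarrow> real" where
  "tminus r s = max 0 (r - s)"

definition sup01 :: "real set \<Rightarrow> real" where
  "sup01 S = (if S = {} then 0 else Sup S)"
definition inf01 :: "real set \<Rightarrow> real" where
  "inf01 S = (if S = {} then 1 else Inf S)"

definition is_metric01 :: "('a \<Rightarrow> 'a \<Rightarrow> real) \<Rightarrow> bool" where
  "is_metric01 d \<longleftrightarrow> (\<forall>a b. 0 \<le> d a b \<and> d a b \<le> 1) \<and>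
     (\<forall>a b. d a b = 0 \<longleftrightarrow> a = b) \<and> (\<forall>a b. d a b = d b a) \<and>
     (\<forall>a b c. d a c \<le> d a b + d b c)"

inductive path :: "('x \<times> 'a \<times> 'x) set \<Rightarrow> 'x \<Rightarrow> 'a list \<Rightarrow> 'x \<Rightarrow> bool"
  for T where
  path_nil: "path T x [] x"
| path_cons: "(x, a, y) \<in> T \<Longrightarrow> path T y \<sigma> z \<Longrightarrow> path T x (a # \<sigma>) z"

definition delta_hat :: "('x \<times> 'a \<times> 'x) set \<Rightarrow> 'x set \<Rightarrow> ('a list \<times> 'x) set" where
  "delta_hat T Y = {(\<sigma>, x'). \<exists>x\<in>Y. path T x \<sigma> x'}"

fun d_Tr :: "('a \<Rightarrow> 'a \<Rightarrow> real) \<Rightarrow> 'a list \<Rightarrow> 'a list \<Rightarrow> real" where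
  "d_Tr dA [] [] = 0"
| "d_Tr dA (a1 # s1) (a2 # s2) = max (dA a1 a2) (d_Tr dA s1 s2)"
| "d_Tr dA _ _ = 1"

definition circ :: "('x \<times> 'a \<times> 'x) set \<Rightarrow> ('a \<Rightarrow> 'a \<Rightarrow> real) \<Rightarrow> 'a \<Rightarrow> ('x \<Rightarrow> real) \<Rightarrow> 'x \<Rightarrow> real" where
  "circ T dA a f x = sup01 {min (1 - dA b a) (f x') | b x'. (x, b, x') \<in> T}"

inductive_set cl_sh :: "('x \<Rightarrow> real) set \<Rightarrow> ('x \<Rightarrow> real) set" for F where
  cl_base: "f \<in> F \<Longrightarrow> f \<in> cl_sh F"
| cl_minus: "f \<in> cl_sh F \<Longrightarrow> 0 \<le> c \<Longrightarrow> c \<le> 1 \<Longrightarrow> (\<lambda>x. tminus (f x) c) \<in> cl_sh F"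
| cl_plus: "f \<in> cl_sh F \<Longrightarrow> 0 \<le> c \<Longrightarrow> c \<le> 1 \<Longrightarrow> (\<lambda>x. tplus (f x) c) \<in> cl_sh F"

definition lo_T :: "('x \<times> 'a \<times> 'x) set \<Rightarrow> ('a \<Rightarrow> 'a \<Rightarrow> real) \<Rightarrow> ('x \<Rightarrow> real) set \<Rightarrow> ('x \<Rightarrow> real) set" where
  "lo_T T dA F = {circ T dA a f | a f. f \<in> cl_sh F} \<union> {\<lambda>_. 1}"

definition lo' :: "('x \<times> 'a \<times> 'x) set \<Rightarrow> ('a \<Rightarrow> 'a \<Rightarrow> real) \<Rightarrow> ('x \<Rightarrow> real) set \<Rightarrow> ('x \<Rightarrow> real) set" where
  "lo' T dA F = {circ T dA a f | a f. f \<in> F} \<union> {\<lambda>_. 1}"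

definition alpha_S :: "('x \<Rightarrow> real) set \<Rightarrow> 'x \<Rightarrow> 'x \<Rightarrow> real" where
  "alpha_S G x1 x2 = sup01 {tminus (g x1) (g x2) | g. g \<in> G}"

definition alpha_T :: "('x \<Rightarrow> real) set \<Rightarrow> 'x set \<Rightarrow> 'x set \<Rightarrow> real" where
  "alpha_T F X1 X2 = sup01 {tminus (sup01 (f ` X1)) (sup01 (f ` X2)) | f. f \<in> F}"

definition trace_hausdorff ::
  "('x \<times> 'a \<times> 'x) set \<Rightarrow> ('a \<Rightarrow> 'a \<Rightarrow> real) \<Rightarrow> ('x \<Rightarrow> 'x \<Rightarrow> real) \<Rightarrow> 'x set \<Rightarrow> 'x set \<Rightarrow> real" where
  "trace_hausdorff T dA d0 X1 X2 =
     sup01 {inf01 {max (d_Tr dA (fst u) (fst v)) (d0 (snd u) (snd v)) | v. v \<in> delta_hat T X2}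
           | u. u \<in> delta_hat T X1}"

end

theory Submission
  imports Defs
begin


lemma sup01_upper: assumes "s \<in> S" "\<forall>t\<in>S. t \<le> B" shows "s \<le> sup01 S"
proof -
  have "bdd_above S" using assms(2) by (meson bdd_aboveI)
  then have "s \<le> Sup S" using assms(1) by (rule cSup_upper[rotated])
  moreover have "S \<noteq> {}" using assms(1) by blast
  ultimately show ?thesis unfolding sup01_def by simp
qed

lemma sup01_least: assumes "\<forall>s\<in>S. s \<le> c" "0 \<le> c" shows "sup01 S \<le> c"
proof (cases "S = {}")
  case True then show ?thesis using assms by (simp add: sup01_def)
next
  case False
  then have "Sup S \<le> c" using assms(1) by (meson cSup_least)
  then show ?thesis using False unfolding sup01_def by simp
qed

lemma sup01_in01: assumes a: "\<forall>s\<in>S. 0 \<le> s \<and> s \<le> 1" shows "0 \<le> sup01 S \<and> sup01 S \<le> 1"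
proof (cases "S = {}")
  case True then show ?thesis by (simp add: sup01_def)
next
  case False
  then obtain s where s: "s \<in> S" by blast
  have 1: "s \<le> sup01 S" using sup01_upper[OF s] a by blast
  have 2: "sup01 S \<le> 1" using sup01_least[of S 1] a by simp
  have 3: "0 \<le> s" using a s by blast
  show ?thesis using 1 2 3 by linarith
qed

lemma sup01_approx:
  assumes "S \<noteq> {}" "\<forall>t\<in>S. t \<le> B" "e > 0"
  shows "\<exists>s\<in>S. sup01 S - e < s"
proof -
  have "Sup S - e < Sup S" using assms by simp
  then obtain s where "s \<in> S" "Sup S - e < s"
    using less_cSupD[OF assms(1)] by blast
  then show ?thesis using assms(1) unfolding sup01_def by auto
qed

lemma inf01_lower: assumes "s \<in> S" "\<forall>t\<in>S. B \<le> t" shows "inf01 S \<le> s"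
proof -
  have "bdd_below S" using assms(2) by (meson bdd_belowI)
  then have "Inf S \<le> s" using assms(1) by (rule cInf_lower[rotated])
  moreover have "S \<noteq> {}" using assms(1) by blast
  ultimately show ?thesis unfolding inf01_def by simp
qed

lemma inf01_in01: assumes a: "\<forall>s\<in>S. 0 \<le> s \<and> s \<le> 1" shows "0 \<le> inf01 S \<and> inf01 S \<le> 1"
proof (cases "S = {}")
  case True then show ?thesis by (simp add: inf01_def)
next
  case False
  then obtain s where s: "s \<in> S" by blast
  have 1: "inf01 S \<le> s" using inf01_lower[OF s] a by blast
  have 2: "s \<le> 1" using a s by blast
  have "0 \<le> Inf S" using False a by (meson cInf_greatest)
  then have 3: "0 \<le> inf01 S" using False unfolding inf01_def by simp
  show ?thesis using 1 2 3 by linarith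
qed

lemma sup_compare:
  assumes "\<forall>x. 0 \<le> h x \<and> h x \<le> 1" "0 \<le> r"
    "\<And>e y1. 0 < e \<Longrightarrow> y1 \<in> Y1 \<Longrightarrow> h y1 \<le> sup01 (h ` Y2) + r + e"
  shows "sup01 (h ` Y1) \<le> sup01 (h ` Y2) + r"
proof (rule sup01_least)
  have "0 \<le> sup01 (h ` Y2)" using sup01_in01[of "h ` Y2"] assms(1) by auto
  then show "0 \<le> sup01 (h ` Y2) + r" using assms(2) by simp
  show "\<forall>s\<in>h ` Y1. s \<le> sup01 (h ` Y2) + r"
  proof
    fix s assume "s \<in> h ` Y1"
    then obtain y1 where y1: "y1 \<in> Y1" "s = h y1" by auto
    have "h y1 \<le> sup01 (h ` Y2) + r"
    proof (rule field_le_epsilon)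
      fix e :: real assume "0 < e"
      then show "h y1 \<le> sup01 (h ` Y2) + r + e" using assms(3) y1(1) by blast
    qed
    then show "s \<le> sup01 (h ` Y2) + r" using y1(2) by simp
  qed
qed

lemma path_nilD: "path T y [] x \<Longrightarrow> x = y"
  by (cases rule: path.cases) auto

lemma path_consD: "path T y (b # s) x \<Longrightarrow> \<exists>z. (y, b, z) \<in> T \<and> path T z s x"
  by (cases rule: path.cases) auto

lemma metD:
  assumes "is_metric01 dA"
  shows "0 \<le> dA a b" "dA a b \<le> 1" "dA a a = 0" "dA a b = dA b a" "dA a c \<le> dA a b + dA b c"
  using assms unfolding is_metric01_def by blast+

lemma d_Tr_bounds:
  assumes "is_metric01 dA" shows "0 \<le> d_Tr dA s t \<and> d_Tr dA s t \<le> 1"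
proof -
  have b: "\<And>a b. 0 \<le> dA a b \<and> dA a b \<le> 1" using metD(1,2)[OF assms] by blast
  show ?thesis
  proof (induction s arbitrary: t)
    case Nil then show ?case by (cases t) auto
  next
    case (Cons a s) then show ?case
      by (cases t) (auto simp: b max_def)
  qed
qed

lemma d_Tr_sym:
  assumes "is_metric01 dA" shows "d_Tr dA s t = d_Tr dA t s"
proof -
  have sy: "\<And>a b. dA a b = dA b a" using metD(4)[OF assms] by blast
  show ?thesis
  proof (induction s arbitrary: t)
    case Nil then show ?case by (cases t) auto
  next
    case (Cons a s) then show ?case
      by (cases t) (simp_all add: sy[of a])
  qed
qed

lemma d_Tr_nil: "d_Tr dA [] t < 1 \<Longrightarrow> t = []"
  by (cases t) auto

lemma d_Tr_cons: "d_Tr dA (b # s) t < 1 \<Longrightarrow> \<exists>b2 t'. t = b2 # t' \<and> d_Tr dA (b # s) t = max (dA b b2) (d_Tr dA s t')"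
  by (cases t) auto



definition Minv :: "('x \<times> 'a \<times> 'x) set \<Rightarrow> ('a \<Rightarrow> 'a \<Rightarrow> real) \<Rightarrow> ('x \<Rightarrow> 'x \<Rightarrow> real) \<Rightarrow> 'x set \<Rightarrow> 'x set \<Rightarrow> real \<Rightarrow> bool" where
  "Minv T dA d0 Y1 Y2 r = (\<forall>s1 x1. (\<exists>y1\<in>Y1. path T y1 s1 x1) \<longrightarrow>
      (\<exists>y2\<in>Y2. \<exists>s2 x2. path T y2 s2 x2 \<and> d_Tr dA s1 s2 \<le> r \<and> d0 x1 x2 \<le> r))"

definition Pinv :: "('x \<times> 'a \<times> 'x) set \<Rightarrow> ('a \<Rightarrow> 'a \<Rightarrow> real) \<Rightarrow> ('x \<Rightarrow> 'x \<Rightarrow> real) \<Rightarrow> ('x \<Rightarrow> real) \<Rightarrow> bool" where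
  "Pinv T dA d0 f = ((\<forall>x. 0 \<le> f x \<and> f x \<le> 1) \<and>
     (\<forall>Y1 Y2 r. 0 \<le> r \<longrightarrow> r < 1 \<longrightarrow> Minv T dA d0 Y1 Y2 r \<longrightarrow> sup01 (f ` Y1) \<le> sup01 (f ` Y2) + r))"

lemma Minv_nonempty:
  assumes "Minv T dA d0 Y1 Y2 r" "y1 \<in> Y1" shows "Y2 \<noteq> {}"
proof -
  have "\<exists>y1\<in>Y1. path T y1 [] y1" using assms(2) path.path_nil[of T y1] by blast
  then show ?thesis using assms(1) unfolding Minv_def by blast
qed

lemma Pinv_shift:
  assumes P: "Pinv T dA d0 f"
    and phi1: "\<And>a b d. a \<le> b + d \<Longrightarrow> 0 \<le> d \<Longrightarrow> phi a \<le> phi b + d"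
    and phi2: "\<And>a. 0 \<le> a \<Longrightarrow> a \<le> 1 \<Longrightarrow> 0 \<le> phi a \<and> phi a \<le> 1"
  shows "Pinv T dA d0 (\<lambda>x. phi (f x))"
proof -
  have fb: "\<forall>x. 0 \<le> f x \<and> f x \<le> 1" using P unfolding Pinv_def by blast
  have hb: "\<forall>x. 0 \<le> phi (f x) \<and> phi (f x) \<le> 1" using fb phi2 by blast
  have "sup01 ((\<lambda>x. phi (f x)) ` Y1) \<le> sup01 ((\<lambda>x. phi (f x)) ` Y2) + r"
    if r: "0 \<le> r" "r < 1" and M: "Minv T dA d0 Y1 Y2 r" for Y1 Y2 r
  proof (rule sup_compare[OF hb r(1)])
    fix e :: real and y1 assume e: "0 < e" and y1: "y1 \<in> Y1"
    have ne: "Y2 \<noteq> {}" using Minv_nonempty[OF M y1] .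
    have fbd: "\<forall>t\<in>f ` Y2. t \<le> 1" using fb by blast
    obtain t where t: "t \<in> f ` Y2" "sup01 (f ` Y2) - e < t"
      using sup01_approx[of "f ` Y2" 1 e] ne fbd e by blast
    then obtain y2 where y2: "y2 \<in> Y2" "t = f y2" by blast
    have "f y1 \<le> sup01 (f ` Y1)" using sup01_upper[of "f y1" "f ` Y1" 1] y1 fb by blast
    also have "\<dots> \<le> sup01 (f ` Y2) + r" using P r M unfolding Pinv_def by blast
    finally have "f y1 \<le> f y2 + (r + e)" using t y2 by linarith
    then have "phi (f y1) \<le> phi (f y2) + (r + e)" using phi1 r e by simp
    moreover have "phi (f y2) \<le> sup01 ((\<lambda>x. phi (f x)) ` Y2)"
      using sup01_upper[of "phi (f y2)" "(\<lambda>x. phi (f x)) ` Y2" 1] y2 hb by blast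
    ultimately show "phi (f y1) \<le> sup01 ((\<lambda>x. phi (f x)) ` Y2) + r + e" by linarith
  qed
  then show ?thesis using hb unfolding Pinv_def by blast
qed

lemma Pinv_tminus: "Pinv T dA d0 f \<Longrightarrow> 0 \<le> c \<Longrightarrow> c \<le> 1 \<Longrightarrow> Pinv T dA d0 (\<lambda>x. tminus (f x) c)"
  by (rule Pinv_shift) (auto simp: tminus_def)

lemma Pinv_tplus: "Pinv T dA d0 f \<Longrightarrow> 0 \<le> c \<Longrightarrow> c \<le> 1 \<Longrightarrow> Pinv T dA d0 (\<lambda>x. tplus (f x) c)"
  by (rule Pinv_shift) (auto simp: tplus_def)

lemma Pinv_cl_sh: "f \<in> cl_sh F \<Longrightarrow> F \<subseteq> Collect (Pinv T dA d0) \<Longrightarrow> Pinv T dA d0 f"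
  by (induction rule: cl_sh.induct) (auto intro: Pinv_tminus Pinv_tplus)

lemma Pinv_one: "Pinv T dA d0 (\<lambda>_. 1)"
proof -
  have "sup01 ((\<lambda>_. 1::real) ` Y1) \<le> sup01 ((\<lambda>_. 1::real) ` Y2) + r"
    if r: "0 \<le> r" "r < 1" and M: "Minv T dA d0 Y1 Y2 r" for Y1 Y2 r
  proof (rule sup_compare)
    fix e :: real and y1 assume e: "0 < e" and y1: "y1 \<in> Y1"
    obtain y2 where y2: "y2 \<in> Y2" using Minv_nonempty[OF M y1] by blast
    have "1 \<le> sup01 ((\<lambda>_. 1::real) ` Y2)"
      using sup01_upper[of 1 "(\<lambda>_. 1::real) ` Y2" 1] y2 by blast
    then show "(1::real) \<le> sup01 ((\<lambda>_. 1::real) ` Y2) + r + e" using r e by linarith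
  qed (use r in auto)
  then show ?thesis unfolding Pinv_def by simp
qed



lemma alpha_S_props:
  assumes Gb: "\<forall>g\<in>G. \<forall>x. 0 \<le> g x \<and> g x \<le> 1"
  shows "0 \<le> alpha_S G x y \<and> alpha_S G x y \<le> 1"
    and "g \<in> G \<Longrightarrow> g x - g y \<le> alpha_S G x y"
proof -
  have el: "\<forall>s\<in>{tminus (g x) (g y) | g. g \<in> G}. 0 \<le> s \<and> s \<le> 1"
  proof
    fix s assume "s \<in> {tminus (g x) (g y) | g. g \<in> G}"
    then obtain g' where g': "s = tminus (g' x) (g' y)" "g' \<in> G" by blast
    have "0 \<le> g' y" "g' x \<le> 1" using Gb g'(2) by blast+
    then show "0 \<le> s \<and> s \<le> 1" using g'(1) by (simp add: tminus_def)
  qed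
  then show "0 \<le> alpha_S G x y \<and> alpha_S G x y \<le> 1"
    unfolding alpha_S_def by (rule sup01_in01)
  assume g: "g \<in> G"
  have "tminus (g x) (g y) \<le> alpha_S G x y"
    unfolding alpha_S_def
    by (rule sup01_upper[where B=1]) (use g el in blast)+
  then show "g x - g y \<le> alpha_S G x y" by (simp add: tminus_def)
qed

lemma Pinv_G:
  assumes Gb: "\<forall>g\<in>G. \<forall>x. 0 \<le> g x \<and> g x \<le> 1" and g: "g \<in> G"
  shows "Pinv T dA (alpha_S G) g"
proof -
  have gb: "\<forall>x. 0 \<le> g x \<and> g x \<le> 1" using Gb g by blast
  have "sup01 (g ` Y1) \<le> sup01 (g ` Y2) + r"
    if r: "0 \<le> r" "r < 1" and M: "Minv T dA (alpha_S G) Y1 Y2 r" for Y1 Y2 r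
  proof (rule sup_compare[OF gb r(1)])
    fix e :: real and y1 assume e: "0 < e" and y1: "y1 \<in> Y1"
    have "\<exists>y\<in>Y1. path T y [] y1" using y1 path.path_nil[of T y1] by blast
    then obtain y2 s2 x2 where y2: "y2 \<in> Y2" "path T y2 s2 x2" "d_Tr dA [] s2 \<le> r"
      "alpha_S G y1 x2 \<le> r" using M unfolding Minv_def by blast
    have "s2 = []" using d_Tr_nil[of dA s2] y2(3) r by linarith
    then have "x2 = y2" using y2(2) path_nilD[of T y2 x2] by simp
    then have "alpha_S G y1 y2 \<le> r" using y2(4) by simp
    then have "g y1 - g y2 \<le> r" using alpha_S_props(2)[OF Gb g, of y1 y2] by linarith
    moreover have "g y2 \<le> sup01 (g ` Y2)"
      using sup01_upper[of "g y2" "g ` Y2" 1] y2(1) gb by blast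
    ultimately show "g y1 \<le> sup01 (g ` Y2) + r + e" using e by linarith
  qed
  then show ?thesis using gb unfolding Pinv_def by blast
qed

lemma circ_in01:
  assumes met: "is_metric01 dA" and fb: "\<forall>x. 0 \<le> f x \<and> f x \<le> 1"
  shows "0 \<le> circ T dA a f x \<and> circ T dA a f x \<le> 1"
proof -
  have "\<forall>s\<in>{min (1 - dA b a) (f x') | b x'. (x, b, x') \<in> T}. 0 \<le> s \<and> s \<le> 1"
    using fb metD(1,2)[OF met] by (force simp: min_def)
  then show ?thesis unfolding circ_def by (rule sup01_in01)
qed

lemma circ_upper:
  assumes met: "is_metric01 dA" and fb: "\<forall>x. 0 \<le> f x \<and> f x \<le> 1" and tr: "(x, b, x') \<in> T"
  shows "min (1 - dA b a) (f x') \<le> circ T dA a f x"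
  unfolding circ_def
proof (rule sup01_upper[where B=1])
  show "min (1 - dA b a) (f x') \<in> {min (1 - dA b a) (f x') | b x'. (x, b, x') \<in> T}" using tr by blast
  show "\<forall>t\<in>{min (1 - dA b a) (f x') | b x'. (x, b, x') \<in> T}. t \<le> 1"
  proof
    fix t assume "t \<in> {min (1 - dA b a) (f x') | b x'. (x, b, x') \<in> T}"
    then obtain b' y where "t = min (1 - dA b' a) (f y)" by blast
    moreover have "f y \<le> 1" using fb by blast
    ultimately show "t \<le> 1" by simp
  qed
qed

lemma min_shift: "p \<le> p' + d \<Longrightarrow> q \<le> q' + d \<Longrightarrow> min p q \<le> min p' q' + (d::real)"
  by (simp add: min_def)

lemma Pinv_circ:
  assumes met: "is_metric01 dA" and P: "Pinv T dA d0 f"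
  shows "Pinv T dA d0 (circ T dA a f)"
proof -
  have fb: "\<forall>x. 0 \<le> f x \<and> f x \<le> 1" using P unfolding Pinv_def by blast
  have hb: "\<forall>x. 0 \<le> circ T dA a f x \<and> circ T dA a f x \<le> 1" using circ_in01[OF met fb] by blast
  have PP: "\<And>Y1 Y2 r. 0 \<le> r \<Longrightarrow> r < 1 \<Longrightarrow> Minv T dA d0 Y1 Y2 r \<Longrightarrow> sup01 (f ` Y1) \<le> sup01 (f ` Y2) + r"
    using P unfolding Pinv_def by blast
  have "sup01 (circ T dA a f ` Y1) \<le> sup01 (circ T dA a f ` Y2) + r"
    if r: "0 \<le> r" "r < 1" and M: "Minv T dA d0 Y1 Y2 r" for Y1 Y2 r
  proof (rule sup_compare[OF hb r(1)])
    fix e :: real and y1 assume e: "0 < e" and y1: "y1 \<in> Y1"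
    define S2 where "S2 = sup01 (circ T dA a f ` Y2)"
    have S2nn: "0 \<le> S2" using sup01_in01[of "circ T dA a f ` Y2"] hb unfolding S2_def by blast
    show "circ T dA a f y1 \<le> S2 + r + e"
      unfolding circ_def
    proof (rule sup01_least)
      show "0 \<le> S2 + r + e" using S2nn r e by linarith
      show "\<forall>s\<in>{min (1 - dA b a) (f x') | b x'. (y1, b, x') \<in> T}. s \<le> S2 + r + e"
      proof
        fix s assume "s \<in> {min (1 - dA b a) (f x') | b x'. (y1, b, x') \<in> T}"
        then obtain b1 x1 where s: "s = min (1 - dA b1 a) (f x1)" and tr1: "(y1, b1, x1) \<in> T"
          by blast
        define Z where "Z = {z. \<exists>y2\<in>Y2. \<exists>b2. (y2, b2, z) \<in> T \<and> dA b1 b2 \<le> r}"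
        have MZ: "Minv T dA d0 {x1} Z r"
          unfolding Minv_def
        proof (intro allI impI)
          fix s1 xx assume "\<exists>y\<in>{x1}. path T y s1 xx"
          then have "path T x1 s1 xx" by blast
          then have "path T y1 (b1 # s1) xx" by (rule path.path_cons[OF tr1])
          then obtain y2 s2 x2 where y2: "y2 \<in> Y2" "path T y2 s2 x2"
            "d_Tr dA (b1 # s1) s2 \<le> r" "d0 xx x2 \<le> r"
            using M y1 unfolding Minv_def by blast
          obtain b2 s2' where s2: "s2 = b2 # s2'"
            "d_Tr dA (b1 # s1) s2 = max (dA b1 b2) (d_Tr dA s1 s2')"
            using d_Tr_cons[of dA b1 s1 s2] y2(3) r(2) by (meson le_less_trans)
          obtain z where z: "(y2, b2, z) \<in> T" "path T z s2' x2"
            using path_consD[of T y2 b2 s2' x2] y2(2) s2(1) by blast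
          have "z \<in> Z" unfolding Z_def using y2(1) z(1) y2(3) s2(2) by auto
          moreover have "d_Tr dA s1 s2' \<le> r" using y2(3) s2(2) by simp
          ultimately show "\<exists>y2\<in>Z. \<exists>s2 x2. path T y2 s2 x2 \<and> d_Tr dA s1 s2 \<le> r \<and> d0 xx x2 \<le> r"
            using z(2) y2(4) by blast
        qed
        have Zne: "Z \<noteq> {}" using Minv_nonempty[OF MZ] by blast
        have "sup01 (f ` {x1}) \<le> sup01 (f ` Z) + r" using PP[OF r MZ] .
        then have fx1: "f x1 \<le> sup01 (f ` Z) + r" by (simp add: sup01_def)
        have fbd: "\<forall>t\<in>f ` Z. t \<le> 1" using fb by blast
        obtain t where t: "t \<in> f ` Z" "sup01 (f ` Z) - e < t"
          using sup01_approx[of "f ` Z" 1 e] Zne fbd e by blast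
        then obtain z where z: "z \<in> Z" "t = f z" by blast
        then obtain y2 b2 where y2: "y2 \<in> Y2" "(y2, b2, z) \<in> T" "dA b1 b2 \<le> r"
          unfolding Z_def by blast
        have tri: "dA b2 a \<le> dA b1 a + r"
          using metD(5)[OF met, of b2 a b1] metD(4)[OF met, of b1 b2] y2(3) by linarith
        have c1: "min (1 - dA b2 a) (f z) \<le> circ T dA a f y2"
          using circ_upper[OF met fb y2(2)] .
        have c2: "circ T dA a f y2 \<le> S2"
          unfolding S2_def using sup01_upper[of "circ T dA a f y2" "circ T dA a f ` Y2" 1] y2(1) hb by blast
        have "min (1 - dA b1 a) (f x1) \<le> min (1 - dA b2 a) (f z) + r + e"
          using min_shift[of "1 - dA b1 a" "1 - dA b2 a" "r + e" "f x1" "f z"] tri fx1 t z(2) e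
          by linarith
        then show "s \<le> S2 + r + e" using s c1 c2 by linarith
      qed
    qed
  qed
  then show ?thesis using hb unfolding Pinv_def by blast
qed



lemma H_bounds:
  assumes met: "is_metric01 dA" and d0b: "\<forall>x y. 0 \<le> d0 x y \<and> d0 x y \<le> 1"
  shows "\<forall>v\<in>{max (d_Tr dA (fst u) (fst v)) (d0 (snd u) (snd v)) | v. v \<in> delta_hat T X2}. 0 \<le> v \<and> v \<le> 1"
    and "0 \<le> inf01 {max (d_Tr dA (fst u) (fst v)) (d0 (snd u) (snd v)) | v. v \<in> delta_hat T X2}
         \<and> inf01 {max (d_Tr dA (fst u) (fst v)) (d0 (snd u) (snd v)) | v. v \<in> delta_hat T X2} \<le> 1"
    and "0 \<le> trace_hausdorff T dA d0 X1 X2 \<and> trace_hausdorff T dA d0 X1 X2 \<le> 1"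
proof -
  show A: "\<forall>v\<in>{max (d_Tr dA (fst u) (fst v)) (d0 (snd u) (snd v)) | v. v \<in> delta_hat T X2}. 0 \<le> v \<and> v \<le> 1" for u
  proof
    fix w assume "w \<in> {max (d_Tr dA (fst u) (fst v)) (d0 (snd u) (snd v)) | v. v \<in> delta_hat T X2}"
    then obtain v where w: "w = max (d_Tr dA (fst u) (fst v)) (d0 (snd u) (snd v))" by blast
    have "0 \<le> d_Tr dA (fst u) (fst v) \<and> d_Tr dA (fst u) (fst v) \<le> 1" using d_Tr_bounds[OF met] .
    moreover have "0 \<le> d0 (snd u) (snd v) \<and> d0 (snd u) (snd v) \<le> 1" using d0b by blast
    ultimately show "0 \<le> w \<and> w \<le> 1" using w by (simp add: max_def)
  qed
  show B: "0 \<le> inf01 {max (d_Tr dA (fst u) (fst v)) (d0 (snd u) (snd v)) | v. v \<in> delta_hat T X2}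
         \<and> inf01 {max (d_Tr dA (fst u) (fst v)) (d0 (snd u) (snd v)) | v. v \<in> delta_hat T X2} \<le> 1" for u
    by (rule inf01_in01[OF A])
  show "0 \<le> trace_hausdorff T dA d0 X1 X2 \<and> trace_hausdorff T dA d0 X1 X2 \<le> 1"
    unfolding trace_hausdorff_def
    by (rule sup01_in01) (use B in blast)
qed

lemma H_Minv:
  assumes met: "is_metric01 dA" and d0b: "\<forall>x y. 0 \<le> d0 x y \<and> d0 x y \<le> 1"
    and H: "trace_hausdorff T dA d0 X1 X2 < r" and r: "r \<le> 1"
  shows "Minv T dA d0 X1 X2 r"
  unfolding Minv_def
proof (intro allI impI)
  fix s1 x1 assume "\<exists>y1\<in>X1. path T y1 s1 x1"
  then have u: "(s1, x1) \<in> delta_hat T X1" unfolding delta_hat_def by blast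
  define V where "V = {max (d_Tr dA (fst (s1, x1)) (fst v)) (d0 (snd (s1, x1)) (snd v)) | v. v \<in> delta_hat T X2}"
  have "inf01 V \<le> trace_hausdorff T dA d0 X1 X2"
    unfolding trace_hausdorff_def V_def
    by (rule sup01_upper[where B=1]) (use u H_bounds(2)[OF met d0b] in blast)+
  then have lt: "inf01 V < r" using H by linarith
  have Vne: "V \<noteq> {}"
  proof
    assume "V = {}"
    then have "inf01 V = 1" by (simp add: inf01_def)
    then show False using lt r by linarith
  qed
  then have "Inf V < r" using lt by (simp add: inf01_def)
  then obtain w where w: "w \<in> V" "w < r" using cInf_lessD[OF Vne] by blast
  then obtain v where v: "v \<in> delta_hat T X2" "w = max (d_Tr dA s1 (fst v)) (d0 x1 (snd v))"
    unfolding V_def by auto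
  obtain s2 x2 where vv: "v = (s2, x2)" by (cases v)
  then obtain y2 where y2: "y2 \<in> X2" "path T y2 s2 x2" using v(1) unfolding delta_hat_def by blast
  have "d_Tr dA s1 s2 \<le> r" "d0 x1 x2 \<le> r" using w(2) v(2) vv by auto
  then show "\<exists>y2\<in>X2. \<exists>s2 x2. path T y2 s2 x2 \<and> d_Tr dA s1 s2 \<le> r \<and> d0 x1 x2 \<le> r"
    using y2 by blast
qed

lemma alpha_le:
  assumes met: "is_metric01 dA" and d0b: "\<forall>x y. 0 \<le> d0 x y \<and> d0 x y \<le> 1"
    and FS: "F \<subseteq> Collect (Pinv T dA d0)"
  shows "alpha_T F X1 X2 \<le> trace_hausdorff T dA d0 X1 X2"
proof -
  define H where "H = trace_hausdorff T dA d0 X1 X2"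
  have Hb: "0 \<le> H \<and> H \<le> 1" unfolding H_def using H_bounds(3)[OF met d0b] .
  show ?thesis unfolding alpha_T_def H_def[symmetric]
  proof (rule sup01_least)
    show "0 \<le> H" using Hb by blast
    show "\<forall>s\<in>{tminus (sup01 (f ` X1)) (sup01 (f ` X2)) | f. f \<in> F}. s \<le> H"
    proof
      fix s assume "s \<in> {tminus (sup01 (f ` X1)) (sup01 (f ` X2)) | f. f \<in> F}"
      then obtain f where s: "s = tminus (sup01 (f ` X1)) (sup01 (f ` X2))" and f: "f \<in> F" by blast
      have P: "Pinv T dA d0 f" using FS f by blast
      have fb: "\<forall>x. 0 \<le> f x \<and> f x \<le> 1" using P unfolding Pinv_def by blast
      have PP: "\<And>Y1 Y2 r. 0 \<le> r \<Longrightarrow> r < 1 \<Longrightarrow> Minv T dA d0 Y1 Y2 r \<Longrightarrow> sup01 (f ` Y1) \<le> sup01 (f ` Y2) + r"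
        using P unfolding Pinv_def by blast
      have b1: "0 \<le> sup01 (f ` X1) \<and> sup01 (f ` X1) \<le> 1" by (rule sup01_in01) (use fb in blast)
      have b2: "0 \<le> sup01 (f ` X2) \<and> sup01 (f ` X2) \<le> 1" by (rule sup01_in01) (use fb in blast)
      have key: "sup01 (f ` X1) \<le> sup01 (f ` X2) + H"
      proof (rule field_le_epsilon)
        fix e :: real assume e: "0 < e"
        show "sup01 (f ` X1) \<le> sup01 (f ` X2) + H + e"
        proof (cases "H + e < 1")
          case True
          have "Minv T dA d0 X1 X2 (H + e)"
            by (rule H_Minv[OF met d0b]) (use True e H_def in auto)
          then have "sup01 (f ` X1) \<le> sup01 (f ` X2) + (H + e)"
            using PP[of "H + e" X1 X2] True e Hb by linarith
          then show ?thesis by linarith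
        next
          case False
          then show ?thesis using b1 b2 by linarith
        qed
      qed
      show "s \<le> H" using s key Hb by (simp add: tminus_def)
    qed
  qed
qed

definition iterc :: "('x \<times> 'a \<times> 'x) set \<Rightarrow> ('a \<Rightarrow> 'a \<Rightarrow> real) \<Rightarrow> 'a list \<Rightarrow> ('x \<Rightarrow> real) \<Rightarrow> 'x \<Rightarrow> real" where
  "iterc T dA s g = foldr (circ T dA) s g"

lemma iterc_simps: "iterc T dA [] g = g" "iterc T dA (a # s) g = circ T dA a (iterc T dA s g)"
  unfolding iterc_def by simp_all

lemma iterc_in01:
  assumes met: "is_metric01 dA" and gb: "\<forall>x. 0 \<le> g x \<and> g x \<le> 1"
  shows "\<forall>x. 0 \<le> iterc T dA s g x \<and> iterc T dA s g x \<le> 1"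
proof (induction s)
  case Nil then show ?case using gb by (simp add: iterc_simps)
next
  case (Cons a s) then show ?case using circ_in01[OF met Cons.IH] by (simp add: iterc_simps)
qed

lemma iterc_lb:
  assumes met: "is_metric01 dA" and gb: "\<forall>x. 0 \<le> g x \<and> g x \<le> 1"
  shows "path T x s x' \<Longrightarrow> g x' \<le> iterc T dA s g x"
proof (induction rule: path.induct)
  case (path_nil x) then show ?case by (simp add: iterc_simps)
next
  case (path_cons x a y s z)
  have ib: "\<forall>x. 0 \<le> iterc T dA s g x \<and> iterc T dA s g x \<le> 1" using iterc_in01[OF met gb] .
  have "min (1 - dA a a) (iterc T dA s g y) \<le> circ T dA a (iterc T dA s g) x"
    using circ_upper[OF met ib path_cons(1)] .
  moreover have "min (1 - dA a a) (iterc T dA s g y) = iterc T dA s g y"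
    using metD(3)[OF met] ib by simp
  ultimately show ?case using path_cons(3) by (simp add: iterc_simps)
qed

lemma iterc_ub:
  assumes met: "is_metric01 dA" and gb: "\<forall>x. 0 \<le> g x \<and> g x \<le> 1" and c: "c \<le> 1"
  shows "(\<forall>t x'. path T x t x' \<longrightarrow> c \<le> max (d_Tr dA t s) (1 - g x')) \<Longrightarrow> iterc T dA s g x \<le> 1 - c"
proof (induction s arbitrary: x)
  case Nil
  have "c \<le> max (d_Tr dA [] []) (1 - g x)" using Nil path.path_nil[of T x] by blast
  moreover have "g x \<le> 1" using gb by blast
  ultimately show ?case by (simp add: iterc_simps max_def split: if_splits)
next
  case (Cons a s)
  have ib: "\<forall>x. 0 \<le> iterc T dA s g x \<and> iterc T dA s g x \<le> 1" using iterc_in01[OF met gb] .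
  show ?case unfolding iterc_simps circ_def
  proof (rule sup01_least)
    show "0 \<le> 1 - c" using c by linarith
    show "\<forall>w\<in>{min (1 - dA b a) (iterc T dA s g x') | b x'. (x, b, x') \<in> T}. w \<le> 1 - c"
    proof
      fix w assume "w \<in> {min (1 - dA b a) (iterc T dA s g x') | b x'. (x, b, x') \<in> T}"
      then obtain b x' where w: "w = min (1 - dA b a) (iterc T dA s g x')" and tr: "(x, b, x') \<in> T"
        by blast
      show "w \<le> 1 - c"
      proof (cases "c \<le> dA b a")
        case True then show ?thesis using w by simp
      next
        case False
        have "\<forall>t x''. path T x' t x'' \<longrightarrow> c \<le> max (d_Tr dA t s) (1 - g x'')"
        proof (intro allI impI)
          fix t x'' assume "path T x' t x''"
          then have "path T x (b # t) x''" by (rule path.path_cons[OF tr])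
          then have "c \<le> max (d_Tr dA (b # t) (a # s)) (1 - g x'')" using Cons.prems by blast
          then show "c \<le> max (d_Tr dA t s) (1 - g x'')" using False by (simp add: max_def split: if_splits)
        qed
        then have "iterc T dA s g x' \<le> 1 - c" using Cons.IH by blast
        then show ?thesis using w by simp
      qed
    qed
  qed
qed

lemma iterc_mem:
  assumes "G \<subseteq> F" "\<forall>a f. f \<in> F \<longrightarrow> circ T dA a f \<in> F" "g \<in> G"
  shows "iterc T dA s g \<in> F"
  using assms by (induction s) (auto simp: iterc_simps)



lemma alpha_ge:
  assumes met: "is_metric01 dA"
    and Gb: "\<forall>g\<in>G. \<forall>x. 0 \<le> g x \<and> g x \<le> 1"
    and Gap: "\<forall>\<epsilon>>0. \<forall>x. \<exists>g\<in>G. g x = 1 \<and> (\<forall>x'. tminus (g x) (g x') \<ge> alpha_S G x x' - \<epsilon>)"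
    and GF: "G \<subseteq> F" and cF: "\<forall>a f. f \<in> F \<longrightarrow> circ T dA a f \<in> F"
    and Fb: "\<forall>f\<in>F. \<forall>x. 0 \<le> f x \<and> f x \<le> 1"
  shows "trace_hausdorff T dA (alpha_S G) X1 X2 \<le> alpha_T F X1 X2"
proof -
  define d0 where "d0 = alpha_S G"
  have d0b: "\<forall>x y. 0 \<le> d0 x y \<and> d0 x y \<le> 1" unfolding d0_def using alpha_S_props(1)[OF Gb] by blast
  define A where "A = alpha_T F X1 X2"
  have img: "0 \<le> sup01 (f ` Y) \<and> sup01 (f ` Y) \<le> 1" if "f \<in> F" for f Y
    by (rule sup01_in01) (use Fb that in blast)
  have Aup: "tminus (sup01 (f ` X1)) (sup01 (f ` X2)) \<le> A" if f: "f \<in> F" for f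
    unfolding A_def alpha_T_def
  proof (rule sup01_upper[where B=1])
    show "tminus (sup01 (f ` X1)) (sup01 (f ` X2)) \<in> {tminus (sup01 (f ` X1)) (sup01 (f ` X2)) | f. f \<in> F}"
      using f by blast
    show "\<forall>t\<in>{tminus (sup01 (f ` X1)) (sup01 (f ` X2)) | f. f \<in> F}. t \<le> 1"
    proof
      fix t assume "t \<in> {tminus (sup01 (f ` X1)) (sup01 (f ` X2)) | f. f \<in> F}"
      then obtain f' where "t = tminus (sup01 (f' ` X1)) (sup01 (f' ` X2))" "f' \<in> F" by blast
      then show "t \<le> 1" using img[of f' X1] img[of f' X2] by (simp add: tminus_def)
    qed
  qed
  obtain g0 where "g0 \<in> G" using Gap by (meson zero_less_one)
  then have "tminus (sup01 (g0 ` X1)) (sup01 (g0 ` X2)) \<le> A" using Aup GF by blast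
  then have A0: "0 \<le> A" by (simp add: tminus_def)
  show ?thesis unfolding d0_def[symmetric] A_def[symmetric] trace_hausdorff_def
  proof (rule sup01_least[OF _ A0], rule ballI)
    fix w assume "w \<in> {inf01 {max (d_Tr dA (fst u) (fst v)) (d0 (snd u) (snd v)) | v. v \<in> delta_hat T X2} | u. u \<in> delta_hat T X1}"
    then obtain u where u: "u \<in> delta_hat T X1"
      and w: "w = inf01 {max (d_Tr dA (fst u) (fst v)) (d0 (snd u) (snd v)) | v. v \<in> delta_hat T X2}" by blast
    obtain s1 x1 where uu: "u = (s1, x1)" by (cases u)
    then obtain x0 where x0: "x0 \<in> X1" "path T x0 s1 x1" using u unfolding delta_hat_def by blast
    define V where "V = {max (d_Tr dA (fst u) (fst v)) (d0 (snd u) (snd v)) | v. v \<in> delta_hat T X2}"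
    have Vb: "\<forall>v\<in>V. 0 \<le> v \<and> v \<le> 1" unfolding V_def using H_bounds(1)[OF met d0b] by blast
    have Ib: "0 \<le> inf01 V \<and> inf01 V \<le> 1" using inf01_in01[OF Vb] .
    show "w \<le> A"
    proof (rule field_le_epsilon)
      fix e :: real assume e: "0 < e"
      obtain g where g: "g \<in> G" "g x1 = 1" "\<forall>x'. tminus (g x1) (g x') \<ge> d0 x1 x' - e"
        using Gap e unfolding d0_def by blast
      have gb: "\<forall>x. 0 \<le> g x \<and> g x \<le> 1" using Gb g(1) by blast
      define f where "f = iterc T dA s1 g"
      have fF: "f \<in> F" unfolding f_def using iterc_mem[OF GF cF g(1)] .
      define c where "c = min 1 (inf01 V - e)"
      have c1: "c \<le> 1" unfolding c_def by simp
      have "1 \<le> f x0" unfolding f_def using iterc_lb[OF met gb x0(2)] g(2) by simp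
      also have "f x0 \<le> sup01 (f ` X1)"
        using sup01_upper[of "f x0" "f ` X1" 1] x0(1) Fb fF by blast
      finally have S1: "1 \<le> sup01 (f ` X1)" .
      have S2: "sup01 (f ` X2) \<le> 1 - c"
      proof (rule sup01_least)
        show "0 \<le> 1 - c" using c1 by linarith
        show "\<forall>s\<in>f ` X2. s \<le> 1 - c"
        proof
          fix s assume "s \<in> f ` X2"
          then obtain x where x: "x \<in> X2" "s = f x" by blast
          have "\<forall>t x'. path T x t x' \<longrightarrow> c \<le> max (d_Tr dA t s1) (1 - g x')"
          proof (intro allI impI)
            fix t x' assume p: "path T x t x'"
            then have "(t, x') \<in> delta_hat T X2" using x(1) unfolding delta_hat_def by blast
            then have "max (d_Tr dA s1 t) (d0 x1 x') \<in> V" unfolding V_def uu by force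
            then have I: "inf01 V \<le> max (d_Tr dA s1 t) (d0 x1 x')"
              using inf01_lower[of _ V 0] Vb by blast
            have sy: "d_Tr dA s1 t = d_Tr dA t s1" using d_Tr_sym[OF met] .
            have gx: "d0 x1 x' - e \<le> 1 - g x'" using g(2,3) gb by (simp add: tminus_def)
            have dt: "0 \<le> d_Tr dA t s1" using d_Tr_bounds[OF met] by blast
            have "inf01 V - e \<le> max (d_Tr dA t s1) (1 - g x')"
              using I sy gx dt e by (simp add: max_def split: if_splits)
            then show "c \<le> max (d_Tr dA t s1) (1 - g x')" unfolding c_def by linarith
          qed
          then show "s \<le> 1 - c" unfolding x(2) f_def using iterc_ub[OF met gb c1] by blast
        qed
      qed
      have "c \<le> tminus (sup01 (f ` X1)) (sup01 (f ` X2))"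
        using S1 S2 by (simp add: tminus_def)
      also have "\<dots> \<le> A" using Aup fF by blast
      finally have cA: "c \<le> A" .
      have "inf01 V \<le> A + e"
      proof (cases "1 \<le> inf01 V - e")
        case True then have "c = 1" unfolding c_def by simp
        then show ?thesis using cA Ib e by linarith
      next
        case False then have "c = inf01 V - e" unfolding c_def by simp
        then show ?thesis using cA by linarith
      qed
      then show "w \<le> A + e" using w V_def by simp
    qed
  qed
qed



lemma cl_sh_mono: "f \<in> cl_sh F \<Longrightarrow> F \<subseteq> F' \<Longrightarrow> f \<in> cl_sh F'"
  by (induction rule: cl_sh.induct) (auto intro: cl_sh.intros)

lemma mono_T: "mono (\<lambda>F. lo_T T dA F \<union> G)"
  unfolding mono_def lo_T_def using cl_sh_mono by blast

lemma mono_': "mono (\<lambda>F. lo' T dA F \<union> G)"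
  unfolding mono_def lo'_def by blast

theorem mainTheorem4:
  fixes T :: "('x \<times> 'a \<times> 'x) set" and dA :: "'a \<Rightarrow> 'a \<Rightarrow> real"
    and G :: "('x \<Rightarrow> real) set"
  assumes "is_metric01 dA"
    and "\<forall>g\<in>G. \<forall>x. 0 \<le> g x \<and> g x \<le> 1"
    and "\<forall>\<epsilon>>0. \<forall>x. \<exists>g\<in>G. g x = 1 \<and>
           (\<forall>x'. tminus (g x) (g x') \<ge> alpha_S G x x' - \<epsilon>)"
  shows "(\<forall>X1 X2. alpha_T (lfp (\<lambda>F. lo_T T dA F \<union> G)) X1 X2
                  = trace_hausdorff T dA (alpha_S G) X1 X2)
       \<and> (\<forall>X1 X2. alpha_T (lfp (\<lambda>F. lo' T dA F \<union> G)) X1 X2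
                  = trace_hausdorff T dA (alpha_S G) X1 X2)"
proof -
  note met = assms(1) and Gb = assms(2) and Gap = assms(3)
  define S where "S = Collect (Pinv T dA (alpha_S G))"
  have d0b: "\<forall>x y. 0 \<le> alpha_S G x y \<and> alpha_S G x y \<le> 1" using alpha_S_props(1)[OF Gb] by blast
  have SG: "G \<subseteq> S" unfolding S_def using Pinv_G[OF Gb] by blast
  have ST: "lo_T T dA S \<subseteq> S"
  proof
    fix h assume "h \<in> lo_T T dA S"
    then consider (c) a f where "h = circ T dA a f" "f \<in> cl_sh S" | (one) "h = (\<lambda>_. 1)"
      unfolding lo_T_def by blast
    then show "h \<in> S"
    proof cases
      case c
      have "Pinv T dA (alpha_S G) f" using Pinv_cl_sh[OF c(2)] S_def by blast
      then show ?thesis using Pinv_circ[OF met] c(1) S_def by blast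
    next
      case one then show ?thesis using Pinv_one S_def by blast
    qed
  qed
  have S': "lo' T dA S \<subseteq> lo_T T dA S"
    unfolding lo'_def lo_T_def using cl_sh.cl_base by blast
  define L1 where "L1 = lfp (\<lambda>F. lo_T T dA F \<union> G)"
  define L2 where "L2 = lfp (\<lambda>F. lo' T dA F \<union> G)"
  have L1S: "L1 \<subseteq> S" unfolding L1_def by (rule lfp_lowerbound) (use ST SG in blast)
  have L2S: "L2 \<subseteq> S" unfolding L2_def by (rule lfp_lowerbound) (use ST S' SG in blast)
  have L1u: "L1 = lo_T T dA L1 \<union> G" unfolding L1_def using lfp_unfold[OF mono_T] .
  have L2u: "L2 = lo' T dA L2 \<union> G" unfolding L2_def using lfp_unfold[OF mono_'] .
  have G1: "G \<subseteq> L1" using L1u by blast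
  have G2: "G \<subseteq> L2" using L2u by blast
  have c1: "\<forall>a f. f \<in> L1 \<longrightarrow> circ T dA a f \<in> L1"
  proof (intro allI impI)
    fix a f assume "f \<in> L1"
    then have "f \<in> cl_sh L1" by (rule cl_sh.cl_base)
    then have "circ T dA a f \<in> lo_T T dA L1" unfolding lo_T_def by blast
    then show "circ T dA a f \<in> L1" using L1u by blast
  qed
  have c2: "\<forall>a f. f \<in> L2 \<longrightarrow> circ T dA a f \<in> L2"
  proof (intro allI impI)
    fix a f assume "f \<in> L2"
    then have "circ T dA a f \<in> lo' T dA L2" unfolding lo'_def by blast
    then show "circ T dA a f \<in> L2" using L2u by blast
  qed
  have Sb: "\<forall>f\<in>S. \<forall>x. 0 \<le> f x \<and> f x \<le> 1" unfolding S_def Pinv_def by blast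
  have F1b: "\<forall>f\<in>L1. \<forall>x. 0 \<le> f x \<and> f x \<le> 1" using Sb L1S by blast
  have F2b: "\<forall>f\<in>L2. \<forall>x. 0 \<le> f x \<and> f x \<le> 1" using Sb L2S by blast
  have "alpha_T L1 X1 X2 = trace_hausdorff T dA (alpha_S G) X1 X2" for X1 X2
    using alpha_le[OF met d0b L1S[unfolded S_def]] alpha_ge[OF met Gb Gap G1 c1 F1b]
    by (intro antisym)
  moreover have "alpha_T L2 X1 X2 = trace_hausdorff T dA (alpha_S G) X1 X2" for X1 X2
    using alpha_le[OF met d0b L2S[unfolded S_def]] alpha_ge[OF met Gb Gap G2 c2 F2b]
    by (intro antisym)
  ultimately show ?thesis unfolding L1_def L2_def by blast
qed

end
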